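(* Let $r\ge2$, $n\ge2r$, and let $H\subseteq\binom{\Omega_n}{r}$ be $M_1^{(r)}$-saturated. Then: (1) every vertex of $\Omega_n$ lies in some edge of $H$ (so $\lambda(v_i),\rho(v_i)$ are defined for all $i$); (2) for all $i$, $\lambda(v_i)\notin[v_{i-r+2},v_{i+r-1}]$ and $\rho(v_i)\notin[v_{i-r+1},v_{i+r-2}]$; (3) for all $i$, $\rho(v_i)\in(v_i,\lambda(v_i)]$, i.e. going clockwise from $v_i$ one reaches $\rho(v_i)$ no later than $\lambda(v_i)$ (possibly $\rho(v_i)=\lambda(v_i)$), and both differ from $v_i$; (4) for all $i$, if $v_j\in[\rho(v_i),\lambda(v_i)]$ then every $e\in\binom{\Omega_n}{r}$ with $\{v_i,v_j\}\subseteq e$ belongs to $H$.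
   Context: $\Omega_n=\{v_0,\dots,v_{n-1}\}$ with cyclic order $v_0<\dots<v_{n-1}<v_0$, indices mod $n$. For distinct vertices $u,w$, $(u,w)$ is the set of vertices strictly between $u$ and $w$ moving clockwise from $u$ to $w$; $[u,w]=(u,w)\cup\{u,w\}$, $(u,w]=(u,w)\cup\{w\}$, $[u,w)=(u,w)\cup\{u\}$. An $r$-cgh $H\subseteq\binom{\Omega_n}{r}$ is $M_1^{(r)}$-saturated if there are no edges $h_1,h_2\in H$ and vertices $u\neq u'$ with $h_1\subseteq[u,u']$ and $h_2\cap[u,u']=\emptyset$, but for every $e\in\binom{\Omega_n}{r}\setminus H$ such a pair exists in $H\cup\{e\}$. For a vertex $v_i$ lying in some edge of $H$: $\lambda(v_i)$ is the vertex $u$ such that some $h\in H$ with $v_i\in h$ satisfies $h\subseteq[u,v_i]$, while no $h\in H$ with $v_i\in h$ satisfies $h\subseteq[u',v_i]$ where $u'$ is the clockwise successor of $u$ (i.e. $[u,v_i]$ is the shortest counterclockwise-ending arc at $v_i$ containing an edge through $v_i$). Symmetrically, $\rho(v_i)$ is the vertex $u$ such that some $h\in H$ with $v_i\in h$ satisfies $h\subseteq[v_i,u]$ but no such edge lies in $[v_i,u'']$ with $u''$ the clockwise predecessor of $u$. *)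

theory Defs
  imports Main
begin

text \<open>Vertices of Omega_n are represented by the indices 0..<n (v_i = i), with
cyclic (clockwise) order 0 < 1 < ... < n-1 < 0.  Edges are sets of indices.\<close>

text \<open>Closed clockwise arc [u,w] from u to w (u, w < n).\<close>
definition carc :: "nat \<Rightarrow> nat \<Rightarrow> nat \<Rightarrow> nat set" where
  "carc n u w = {(u + k) mod n | k. k \<le> (w + n - u) mod n}"

definition ocarc :: "nat \<Rightarrow> nat \<Rightarrow> nat \<Rightarrow> nat set" where
  "ocarc n u w = carc n u w - {u}"

definition r_sets :: "nat \<Rightarrow> nat \<Rightarrow> nat set set" where
  "r_sets n r = {e. e \<subseteq> {..<n} \<and> card e = r}"

definition has_M1 :: "nat \<Rightarrow> nat set set \<Rightarrow> bool" where
  "has_M1 n H \<longleftrightarrow> (\<exists>h1\<in>H. \<exists>h2\<in>H. \<exists>u<n. \<exists>u'<n. u \<noteq> u' \<and>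
      h1 \<subseteq> carc n u u' \<and> h2 \<inter> carc n u u' = {})"

definition M1_saturated :: "nat \<Rightarrow> nat \<Rightarrow> nat set set \<Rightarrow> bool" where
  "M1_saturated n r H \<longleftrightarrow> H \<subseteq> r_sets n r \<and> \<not> has_M1 n H \<and>
      (\<forall>e \<in> r_sets n r - H. has_M1 n (insert e H))"

text \<open>lambda(v): shortest arc [u,v] containing an edge through v.\<close>
definition lam :: "nat \<Rightarrow> nat set set \<Rightarrow> nat \<Rightarrow> nat" where
  "lam n H v = (THE u. u < n \<and> (\<exists>h\<in>H. v \<in> h \<and> h \<subseteq> carc n u v) \<and>
      \<not> (\<exists>h\<in>H. v \<in> h \<and> h \<subseteq> carc n ((u + 1) mod n) v))"

text \<open>rho(v): shortest arc [v,u] containing an edge through v.\<close>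
definition rho :: "nat \<Rightarrow> nat set set \<Rightarrow> nat \<Rightarrow> nat" where
  "rho n H v = (THE u. u < n \<and> (\<exists>h\<in>H. v \<in> h \<and> h \<subseteq> carc n v u) \<and>
      \<not> (\<exists>h\<in>H. v \<in> h \<and> h \<subseteq> carc n v ((u + n - 1) mod n)))"

end

theory Submission
  imports Defs
begin


lemma mod2: "(a::nat) < 2*n \<Longrightarrow> a mod n = (if a < n then a else a - n)"
proof (cases "a < n")
  case False
  assume "a < 2*n"
  then have "a - n < n" using False by arith
  then show ?thesis using False by (simp add: mod_if)
qed simp

definition pos :: "nat \<Rightarrow> nat \<Rightarrow> nat \<Rightarrow> nat" where
  "pos n i y = (y + n - i) mod n"
definition qinv :: "nat \<Rightarrow> nat \<Rightarrow> nat \<Rightarrow> nat" where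
  "qinv n i t = (t + i) mod n"
definition DD :: "nat \<Rightarrow> nat \<Rightarrow> nat \<Rightarrow> nat" where
  "DD n a b = (if a \<le> b then b - a else b + n - a)"

lemma carc_mem: assumes "u < n"
  shows "y \<in> carc n u w \<longleftrightarrow> y < n \<and> (y + n - u) mod n \<le> (w + n - u) mod n"
proof
  assume "y \<in> carc n u w"
  then obtain k where k: "y = (u+k) mod n" "k \<le> (w + n - u) mod n" unfolding carc_def by blast
  have "(w + n - u) mod n < n" using assms by simp
  then have kn: "k < n" using k(2) by linarith
  have "(y + n - u) mod n = k" using k(1) kn assms
    by (simp add: mod2)
  then show "y < n \<and> (y + n - u) mod n \<le> (w + n - u) mod n" using k assms by simp
next
  assume a: "y < n \<and> (y + n - u) mod n \<le> (w + n - u) mod n"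
  have e1: "(y+n-u) mod n = (if y+n-u < n then y+n-u else y+n-u-n)" using a assms by (intro mod2) arith
  have e2: "(u + (y+n-u) mod n) mod n = (if u + (y+n-u) mod n < n then u + (y+n-u) mod n else u + (y+n-u) mod n - n)"
    using a assms e1 by (intro mod2) (auto split: if_splits)
  have "y = (u + (y + n - u) mod n) mod n" using a assms e1 e2 by (auto split: if_splits)
  then show "y \<in> carc n u w" unfolding carc_def using a by blast
qed

lemma pos_lt: "i < n \<Longrightarrow> pos n i y < n" unfolding pos_def by simp

lemma pos_alt: "i < n \<Longrightarrow> y < n \<Longrightarrow> pos n i y = (if i \<le> y then y - i else y + n - i)"
  unfolding pos_def by (simp add: mod2)

lemma posdiff: "u < n \<Longrightarrow> y < n \<Longrightarrow> i < n \<Longrightarrow> (y + n - u) mod n = DD n (pos n i u) (pos n i y)"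
  by (simp add: pos_alt DD_def mod2)

lemma carc_pos: "i < n \<Longrightarrow> u < n \<Longrightarrow> w < n \<Longrightarrow>
   y \<in> carc n u w \<longleftrightarrow> y < n \<and> DD n (pos n i u) (pos n i y) \<le> DD n (pos n i u) (pos n i w)"
  using carc_mem posdiff by metis

lemma pos_qinv: "i < n \<Longrightarrow> t < n \<Longrightarrow> pos n i (qinv n i t) = t"
  unfolding pos_def qinv_def by (simp add: mod2)
lemma qinv_pos: "i < n \<Longrightarrow> y < n \<Longrightarrow> qinv n i (pos n i y) = y"
  unfolding pos_def qinv_def by (simp add: mod2)
lemma qinv_lt: "i < n \<Longrightarrow> qinv n i t < n" unfolding qinv_def by simp
lemma pos_self: "i < n \<Longrightarrow> pos n i i = 0" unfolding pos_def by simp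
lemma pos_zero: "i < n \<Longrightarrow> y < n \<Longrightarrow> pos n i y = 0 \<longleftrightarrow> y = i"
  by (auto simp: pos_alt)
lemma pos_inj: "i < n \<Longrightarrow> inj_on (pos n i) {..<n}"
  by (metis inj_onI lessThan_iff qinv_pos)
lemma pos_shift: "i < n \<Longrightarrow> pos n i ((i + c) mod n) = c mod n"
proof -
  assume "i < n"
  have "pos n i ((i + c) mod n) = ((i + c) mod n + (n - i)) mod n" unfolding pos_def
    using \<open>i<n\<close> by (simp add: add_diff_assoc)
  also have "\<dots> = (i + c + (n - i)) mod n" by (simp add: mod_add_left_eq)
  also have "\<dots> = (c + n) mod n" using \<open>i<n\<close> by simp
  finally show ?thesis by simp
qed



lemma arcA: "s<n \<Longrightarrow> DD n s 0 \<le> d \<Longrightarrow> DD n s px \<le> d \<Longrightarrow> \<not> DD n s pa \<le> d \<Longrightarrow> \<not> DD n s pb \<le> d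
   \<Longrightarrow> pa < px \<Longrightarrow> px < pb \<Longrightarrow> pb < n \<Longrightarrow> False"
  unfolding DD_def by (auto split: if_splits)

lemma arcB: "s<n \<Longrightarrow> DD n s pa \<le> d \<Longrightarrow> DD n s pb \<le> d \<Longrightarrow> \<not> DD n s 0 \<le> d \<Longrightarrow> \<not> DD n s px \<le> d
   \<Longrightarrow> 0 < pa \<Longrightarrow> pa < px \<Longrightarrow> px < pb \<Longrightarrow> pb < n \<Longrightarrow> False"
  unfolding DD_def by (auto split: if_splits)

lemma conv1: "s<n \<Longrightarrow> DD n s 0 \<le> d \<Longrightarrow> DD n s pj \<le> d \<Longrightarrow> pj<n \<Longrightarrow>
   (\<forall>t\<le>pj. DD n s t \<le> d) \<or> (\<forall>t<n. pj \<le> t \<longrightarrow> DD n s t \<le> d)"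
proof (cases "s = 0 \<or> pj < s")
  case True
  assume a: "s<n" "DD n s 0 \<le> d" "DD n s pj \<le> d" "pj<n"
  have "\<forall>t\<le>pj. DD n s t \<le> d" using True a unfolding DD_def by (auto split: if_splits)
  then show ?thesis by blast
next
  case False
  assume a: "s<n" "DD n s 0 \<le> d" "DD n s pj \<le> d" "pj<n"
  have "\<forall>t<n. pj \<le> t \<longrightarrow> DD n s t \<le> d" using False a unfolding DD_def by (auto split: if_splits)
  then show ?thesis by blast
qed

lemma conv2: "s<n \<Longrightarrow> \<not> DD n s 0 \<le> d \<Longrightarrow> \<not> DD n s pj \<le> d \<Longrightarrow> pj<n \<Longrightarrow>
   (\<forall>t<n. DD n s t \<le> d \<longrightarrow> t < pj) \<or> (\<forall>t<n. DD n s t \<le> d \<longrightarrow> pj < t)"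
proof (cases "s < pj")
  case True
  assume a: "s<n" "\<not> DD n s 0 \<le> d" "\<not> DD n s pj \<le> d" "pj<n"
  have "\<forall>t<n. DD n s t \<le> d \<longrightarrow> t < pj" using True a unfolding DD_def by (auto split: if_splits)
  then show ?thesis by blast
next
  case False
  assume a: "s<n" "\<not> DD n s 0 \<le> d" "\<not> DD n s pj \<le> d" "pj<n"
  have "\<forall>t<n. DD n s t \<le> d \<longrightarrow> pj < t" using False a unfolding DD_def by (auto split: if_splits)
  then show ?thesis by blast
qed

lemma lam_arith: "r \<ge> 2 \<Longrightarrow> 2*r \<le> n \<Longrightarrow> r \<le> L \<Longrightarrow> L \<le> n+1-r \<Longrightarrow>
   \<not> DD n ((n+2-r) mod n) L \<le> DD n ((n+2-r) mod n) ((r-1) mod n)"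
  by (cases "r = 2") (auto simp: DD_def)

lemma rho_arith: "r \<ge> 2 \<Longrightarrow> 2*r \<le> n \<Longrightarrow> r - 1 \<le> R \<Longrightarrow> R \<le> n-r \<Longrightarrow>
   \<not> DD n ((n+1-r) mod n) R \<le> DD n ((n+1-r) mod n) ((r-2) mod n)"
  by (auto simp: DD_def)



lemma pos_add: "i < n \<Longrightarrow> u < n \<Longrightarrow> pos n i ((u + c) mod n) = (pos n i u + c) mod n"
proof -
  assume a: "i < n" "u < n"
  have "u = (pos n i u + i) mod n" using qinv_pos[OF a] unfolding qinv_def by simp
  then have "(u + c) mod n = ((i + pos n i u) mod n + c) mod n" by (simp add: add.commute)
  also have "\<dots> = (i + (pos n i u + c)) mod n" by (simp add: mod_add_left_eq add.assoc)
  finally show ?thesis using pos_shift[OF a(1)] by simp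
qed

lemma carc_to_i: "i < n \<Longrightarrow> w < n \<Longrightarrow> y \<in> carc n w i \<longleftrightarrow> y < n \<and> (pos n i y = 0 \<or> (1 \<le> pos n i w \<and> pos n i w \<le> pos n i y))"
  using carc_pos[of i n w i y] pos_self[of i n] pos_lt[of i n y] pos_lt[of i n w]
  by (auto simp: DD_def split: if_splits)

lemma carc_from_i: "i < n \<Longrightarrow> w < n \<Longrightarrow> y \<in> carc n i w \<longleftrightarrow> y < n \<and> pos n i y \<le> pos n i w"
  using carc_pos[of i n i w y] pos_self[of i n] pos_lt[of i n y] pos_lt[of i n w]
  by (auto simp: DD_def split: if_splits)

locale sat =
  fixes n r :: nat and H :: "nat set set"
  assumes r2: "r \<ge> 2" and nr: "n \<ge> 2 * r" and sat: "M1_saturated n r H"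
begin

lemma Hsub: "h \<in> H \<Longrightarrow> h \<subseteq> {..<n} \<and> card h = r"
  using sat unfolding M1_saturated_def r_sets_def by blast

lemma Hfin: "h \<in> H \<Longrightarrow> finite h"
  using Hsub finite_subset by blast

lemma finH: "finite H"
proof -
  have "H \<subseteq> Pow {..<n}" using Hsub by blast
  then show ?thesis by (meson finite_Pow_iff finite_lessThan finite_subset)
qed

lemma noM1: "h1 \<in> H \<Longrightarrow> h2 \<in> H \<Longrightarrow> u < n \<Longrightarrow> u' < n \<Longrightarrow> u \<noteq> u' \<Longrightarrow>
   h1 \<subseteq> carc n u u' \<Longrightarrow> h2 \<inter> carc n u u' = {} \<Longrightarrow> False"
  using sat unfolding M1_saturated_def has_M1_def by blast

lemma maxl: "e \<in> r_sets n r \<Longrightarrow> e \<notin> H \<Longrightarrow> has_M1 n (insert e H)"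
  using sat unfolding M1_saturated_def by blast

lemma card_pos: assumes "i < n" "h \<in> H" "pos n i ` h \<subseteq> S" "finite S" shows "r \<le> card S"
proof -
  have "inj_on (pos n i) h" using pos_inj[OF assms(1)] Hsub[OF assms(2)] inj_on_subset by blast
  then have "card (pos n i ` h) = r" using Hsub[OF assms(2)] card_image by metis
  then show ?thesis using card_mono[OF assms(4,3)] by simp
qed

lemma K: assumes i: "i < n" and E: "E \<subseteq> {..<n}" "i \<notin> E" "card E = r - 1" and x: "x \<in> E"
  and hx: "\<forall>g\<in>H. i \<notin> g \<longrightarrow> (\<exists>a\<in>g. pos n i a \<le> pos n i x) \<and> (\<exists>b\<in>g. pos n i x \<le> pos n i b)"
  shows "insert i E \<in> H"
proof (rule ccontr)
  let ?e = "insert i E"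
  assume ne: "?e \<notin> H"
  have fin: "finite E" using E finite_subset by blast
  have "card ?e = r" using E fin r2 by simp
  then have "?e \<in> r_sets n r" using E i unfolding r_sets_def by auto
  then have "has_M1 n (insert ?e H)" using maxl ne by blast
  then obtain h1 h2 u u' where hh: "h1 \<in> insert ?e H" "h2 \<in> insert ?e H" "u < n" "u' < n" "u \<noteq> u'"
    "h1 \<subseteq> carc n u u'" "h2 \<inter> carc n u u' = {}" unfolding has_M1_def by blast
  let ?s = "pos n i u" and ?d = "DD n (pos n i u) (pos n i u')"
  have mem: "\<And>y. y < n \<Longrightarrow> y \<in> carc n u u' \<longleftrightarrow> DD n ?s (pos n i y) \<le> ?d"
    using carc_pos[OF i hh(3,4)] by blast
  have sn: "?s < n" using pos_lt i by blast
  have xn: "x < n" using E x by blast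
  have px0: "pos n i x \<noteq> 0" using pos_zero[OF i xn] x E by blast
  have pi0: "pos n i i = 0" using pos_self i by blast
  show False
  proof (cases "h1 = ?e")
    case True
    then have iC: "i \<in> carc n u u'" and xC: "x \<in> carc n u u'" using hh(6) x by auto
    have "h2 \<noteq> ?e" using hh(7) iC by auto
    then have h2H: "h2 \<in> H" using hh(2) by auto
    have "i \<notin> h2" using hh(7) iC by auto
    then obtain a b where ab: "a \<in> h2" "b \<in> h2" "pos n i a \<le> pos n i x" "pos n i x \<le> pos n i b"
      using hx h2H by blast
    have abn: "a < n" "b < n" using ab Hsub[OF h2H] by auto
    have nC: "a \<notin> carc n u u'" "b \<notin> carc n u u'" using ab hh(7) by auto
    have "a \<noteq> x" "b \<noteq> x" using nC xC by auto
    then have "pos n i a \<noteq> pos n i x" "pos n i b \<noteq> pos n i x"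
      using qinv_pos[OF i] abn xn by metis+
    then show False using arcA[OF sn, of ?d "pos n i x" "pos n i a" "pos n i b"]
      mem[OF i] mem[OF xn] mem[OF abn(1)] mem[OF abn(2)] iC xC nC ab pi0 pos_lt[OF i, of b] by auto
  next
    case False
    then have h1H: "h1 \<in> H" using hh(1) by auto
    have "h2 = ?e" using noM1[OF h1H _ hh(3-7)] hh(2) by blast
    then have iC: "i \<notin> carc n u u'" and xC: "x \<notin> carc n u u'" using hh(7) x by auto
    have "i \<notin> h1" using hh(6) iC by auto
    then obtain a b where ab: "a \<in> h1" "b \<in> h1" "pos n i a \<le> pos n i x" "pos n i x \<le> pos n i b"
      using hx h1H by blast
    have abn: "a < n" "b < n" using ab Hsub[OF h1H] by auto
    have C: "a \<in> carc n u u'" "b \<in> carc n u u'" using ab hh(6) by auto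
    have "a \<noteq> x" "b \<noteq> x" "a \<noteq> i" using C xC iC by auto
    then have "pos n i a \<noteq> pos n i x" "pos n i b \<noteq> pos n i x" "pos n i a \<noteq> 0"
      using qinv_pos[OF i] abn xn pos_zero[OF i] by metis+
    then show False using arcB[OF sn, of "pos n i a" ?d "pos n i b" "pos n i x"]
      mem[OF i] mem[OF xn] mem[OF abn(1)] mem[OF abn(2)] iC xC C ab pi0 pos_lt[OF i, of b] by auto
  qed
qed

lemma pairwise: assumes i: "i < n" and g: "g \<in> H" "g' \<in> H"
  shows "\<exists>a\<in>g. \<exists>b\<in>g'. pos n i a \<le> pos n i b"
proof (rule ccontr)
  assume "\<not> ?thesis"
  then have lt: "\<And>a b. a \<in> g \<Longrightarrow> b \<in> g' \<Longrightarrow> pos n i b < pos n i a" by force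
  have fg: "finite g" using Hfin g by blast
  have gne: "g \<noteq> {}" using Hsub[OF g(1)] r2 by auto
  let ?m = "Min (pos n i ` g)" and ?M = "Max (pos n i ` g)"
  have "?m \<in> pos n i ` g" using Min_in[of "pos n i ` g"] fg gne by simp
  then obtain am where am: "am \<in> g" "pos n i am = ?m" by (metis imageE)
  have "?M \<in> pos n i ` g" using Max_in[of "pos n i ` g"] fg gne by simp
  then obtain aM where aM: "aM \<in> g" "pos n i aM = ?M" by (metis imageE)
  have gn: "g \<subseteq> {..<n}" "g' \<subseteq> {..<n}" using Hsub g by auto
  have amn: "am < n" "aM < n" using am aM gn by auto
  have ne: "am \<noteq> aM"
  proof
    assume "am = aM"
    have "pos n i ` g \<subseteq> {?m}"
    proof
      fix t assume "t \<in> pos n i ` g"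
      then obtain y where y: "y \<in> g" "t = pos n i y" by blast
      have "?m \<le> pos n i y" "pos n i y \<le> ?M" using y fg by auto
      then show "t \<in> {?m}" using \<open>am = aM\<close> am aM y by simp
    qed
    then have "r \<le> card {?m}" using card_pos[OF i g(1)] by blast
    then show False using r2 by simp
  qed
  have sub: "g \<subseteq> carc n am aM"
  proof
    fix y assume y: "y \<in> g"
    have "?m \<le> pos n i y" "pos n i y \<le> ?M" using y fg by auto
    moreover have "y < n" using y gn by blast
    ultimately have "y < n \<and> DD n (pos n i am) (pos n i y) \<le> DD n (pos n i am) (pos n i aM)"
      unfolding am(2) aM(2) DD_def by simp
    then show "y \<in> carc n am aM" using carc_pos[OF i amn] by blast
  qed
  have dis: "g' \<inter> carc n am aM = {}"
  proof (rule ccontr)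
    assume "g' \<inter> carc n am aM \<noteq> {}"
    then obtain y where y: "y \<in> g'" "y \<in> carc n am aM" by blast
    have "pos n i y < ?m" using lt[OF am(1) y(1)] am by simp
    moreover have "?m \<le> ?M" using fg gne am(1) by (meson Max_ge Min_le finite_imageI imageI order.trans)
    moreover have "?M < n" using aM pos_lt[OF i] by metis
    ultimately have "\<not> DD n (pos n i am) (pos n i y) \<le> DD n (pos n i am) (pos n i aM)"
      unfolding am(2) aM(2) DD_def by simp
    then show False using carc_pos[OF i amn] y by blast
  qed
  show False using noM1[OF g(1,2) amn ne sub dis] .
qed

lemma helly: assumes i: "i < n"
  shows "\<exists>x0. 1 \<le> x0 \<and> x0 < n \<and> (\<forall>g\<in>H. i \<notin> g \<longrightarrow> (\<exists>a\<in>g. pos n i a \<le> x0) \<and> (\<exists>b\<in>g. x0 \<le> pos n i b))"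
proof -
  let ?G = "{g\<in>H. i \<notin> g}"
  let ?S = "insert 1 ((\<lambda>g. Min (pos n i ` g)) ` ?G)"
  have finS: "finite ?S" using finH by simp
  define x0 where "x0 = Max ?S"
  have x0in: "x0 \<in> ?S" unfolding x0_def using finS Max_in by blast
  have gne: "\<And>g. g \<in> H \<Longrightarrow> g \<noteq> {}" using Hsub r2 by fastforce
  have ge: "\<And>t. t \<in> ?S \<Longrightarrow> t \<le> x0" unfolding x0_def using finS by simp
  have "1 \<le> x0" using ge by blast
  moreover have "x0 < n"
  proof -
    { fix g assume g: "g \<in> ?G"
      have "Min (pos n i ` g) \<in> pos n i ` g" using Min_in[of "pos n i ` g"] Hfin gne g by simp
      then obtain a where "a \<in> g" "pos n i a = Min (pos n i ` g)" by (metis imageE)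
      then have "Min (pos n i ` g) < n" using pos_lt[OF i] by metis }
    then show ?thesis using x0in r2 nr by auto
  qed
  moreover have "\<forall>g\<in>H. i \<notin> g \<longrightarrow> (\<exists>a\<in>g. pos n i a \<le> x0) \<and> (\<exists>b\<in>g. x0 \<le> pos n i b)"
  proof (intro ballI impI conjI)
    fix g assume g: "g \<in> H" "i \<notin> g"
    have "Min (pos n i ` g) \<in> pos n i ` g" using Min_in[of "pos n i ` g"] Hfin gne g by simp
    then obtain a where a: "a \<in> g" "pos n i a = Min (pos n i ` g)" by (metis imageE)
    have "Min (pos n i ` g) \<le> x0" using ge g by blast
    then show "\<exists>a\<in>g. pos n i a \<le> x0" using a by metis
    show "\<exists>b\<in>g. x0 \<le> pos n i b"
    proof (cases "x0 = 1")
      case True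
      obtain b where b: "b \<in> g" using gne[OF g(1)] by blast
      have "b < n" using Hsub g b by auto
      then have "pos n i b \<noteq> 0" using pos_zero[OF i] b g by blast
      then show ?thesis using True b by (intro bexI[of _ b]) auto
    next
      case False
      then obtain g'' where g'': "g'' \<in> H" "x0 = Min (pos n i ` g'')" using x0in by auto
      obtain a' b where ab: "a' \<in> g''" "b \<in> g" "pos n i a' \<le> pos n i b" using pairwise[OF i g''(1) g(1)] by blast
      have "Min (pos n i ` g'') \<le> pos n i a'" using ab Hfin g'' by simp
      then show ?thesis using g'' ab by (intro bexI[of _ b]) auto
    qed
  qed
  ultimately show ?thesis by blast
qed

lemma window: assumes i: "i < n" and "1 \<le> lo" "lo \<le> x" "x \<le> hi" "hi < n" "lo + r \<le> hi + 2"
  shows "\<exists>E. E \<subseteq> {..<n} \<and> card E = r - 1 \<and> (\<forall>y\<in>E. lo \<le> pos n i y \<and> pos n i y \<le> hi) \<and> (\<exists>x'\<in>E. pos n i x' = x)"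
proof -
  define a where "a = min x (hi + 2 - r)"
  let ?S = "{a..<a+r-1}"
  have Ssub: "?S \<subseteq> {lo..hi}" using assms r2 unfolding a_def by auto
  have xS: "x \<in> ?S" using assms r2 unfolding a_def by auto
  have inj: "inj_on (qinv n i) ?S"
  proof (rule inj_onI)
    fix s t assume "s \<in> ?S" "t \<in> ?S" "qinv n i s = qinv n i t"
    then show "s = t" using pos_qinv[OF i] Ssub assms(5) by (metis atLeastAtMost_iff le_less_trans subsetD)
  qed
  let ?E = "qinv n i ` ?S"
  have "card ?E = r - 1" using card_image[OF inj] r2 by simp
  moreover have "?E \<subseteq> {..<n}" using qinv_lt[OF i] by auto
  moreover have "\<forall>y\<in>?E. lo \<le> pos n i y \<and> pos n i y \<le> hi"
  proof
    fix y assume "y \<in> ?E"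
    then obtain t where t: "t \<in> ?S" "y = qinv n i t" by blast
    then have "lo \<le> t" "t \<le> hi" using Ssub by auto
    then show "lo \<le> pos n i y \<and> pos n i y \<le> hi" using t pos_qinv[OF i] assms(5) by simp
  qed
  moreover have "\<exists>x'\<in>?E. pos n i x' = x" using xS pos_qinv[OF i] assms by (intro bexI[of _ "qinv n i x"]) auto
  ultimately show ?thesis by blast
qed

lemma Kp: assumes i: "i < n" and "1 \<le> lo" "lo \<le> x" "x \<le> hi" "hi < n" "lo + r \<le> hi + 2"
  and hx: "\<forall>g\<in>H. i \<notin> g \<longrightarrow> (\<exists>a\<in>g. pos n i a \<le> x) \<and> (\<exists>b\<in>g. x \<le> pos n i b)"
  shows "\<exists>h\<in>H. i \<in> h \<and> (\<forall>y\<in>h. y = i \<or> (lo \<le> pos n i y \<and> pos n i y \<le> hi))"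
proof -
  obtain E x' where E: "E \<subseteq> {..<n}" "card E = r - 1" "\<forall>y\<in>E. lo \<le> pos n i y \<and> pos n i y \<le> hi"
    "x' \<in> E" "pos n i x' = x" using window[OF assms(1-6)] by blast
  have "i \<notin> E" using E(3) pos_self[OF i] assms(2) by fastforce
  then have "insert i E \<in> H" using K[OF i E(1) _ E(2,4)] hx E(5) by blast
  then show ?thesis using E(3) by (intro bexI[of _ "insert i E"]) auto
qed

lemma sub_to_i: "i < n \<Longrightarrow> w < n \<Longrightarrow> h \<in> H \<Longrightarrow>
  h \<subseteq> carc n w i \<longleftrightarrow> (\<forall>y\<in>h. pos n i y = 0 \<or> (1 \<le> pos n i w \<and> pos n i w \<le> pos n i y))"
  using carc_to_i Hsub by blast

lemma sub_from_i: "i < n \<Longrightarrow> w < n \<Longrightarrow> h \<in> H \<Longrightarrow>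
  h \<subseteq> carc n i w \<longleftrightarrow> (\<forall>y\<in>h. pos n i y \<le> pos n i w)"
  using carc_from_i Hsub by blast

lemma small0: assumes i: "i < n" and h: "h \<in> H" and z: "\<forall>y\<in>h. pos n i y = 0" shows False
proof -
  have "pos n i ` h \<subseteq> {0}" using z by auto
  then have "r \<le> card {0::nat}" using card_pos[OF i h] by blast
  then show False using r2 by simp
qed

lemma vertex: assumes i: "i < n"
  shows "(\<exists>h\<in>H. i \<in> h) \<and> lam n H i \<notin> carc n ((i + n + 2 - r) mod n) ((i + r - 1) mod n)
    \<and> rho n H i \<notin> carc n ((i + n + 1 - r) mod n) ((i + r - 2) mod n)
    \<and> rho n H i \<in> ocarc n i (lam n H i) \<and> rho n H i \<noteq> i \<and> lam n H i \<noteq> i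
    \<and> (\<forall>j<n. j \<in> carc n (rho n H i) (lam n H i) \<longrightarrow> (\<forall>e\<in>r_sets n r. {i, j} \<subseteq> e \<longrightarrow> e \<in> H))"
proof -
  have n0: "0 < n" using i by simp
  have pi0: "pos n i i = 0" using pos_self[OF i] .
  have posl: "\<And>y. pos n i y < n" using pos_lt[OF i] .
  obtain x0 where x0: "1 \<le> x0" "x0 < n"
    "\<forall>g\<in>H. i \<notin> g \<longrightarrow> (\<exists>a\<in>g. pos n i a \<le> x0) \<and> (\<exists>b\<in>g. x0 \<le> pos n i b)"
    using helly[OF i] by blast
  have gi: "\<And>g y. g \<in> H \<Longrightarrow> i \<notin> g \<Longrightarrow> y \<in> g \<Longrightarrow> 1 \<le> pos n i y"
  proof -
    fix g y assume "g \<in> H" "i \<notin> g" "y \<in> g"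
    then have "y < n" "y \<noteq> i" using Hsub by auto
    then show "1 \<le> pos n i y" using pos_zero[OF i] by (metis less_one not_less)
  qed
  have cover: "\<exists>h\<in>H. i \<in> h"
  proof -
    have c1: "x0 \<le> n - 1" "n - 1 < n" "1 + r \<le> n - 1 + 2" using x0 nr by auto
    show ?thesis using Kp[OF i le_refl x0(1) c1 x0(3)] by blast
  qed
  define A where "A t \<longleftrightarrow> (\<exists>h\<in>H. i \<in> h \<and> (\<forall>y\<in>h. y = i \<or> t \<le> pos n i y))" for t
  define B where "B t \<longleftrightarrow> (\<exists>h\<in>H. i \<in> h \<and> (\<forall>y\<in>h. pos n i y \<le> t))" for t
  have Amono: "A s" if ta: "A t" "s \<le> t" for s t
  proof -
    obtain h where h: "h \<in> H" "i \<in> h" "\<forall>y\<in>h. y = i \<or> t \<le> pos n i y" using ta(1) unfolding A_def by blast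
    have "\<forall>y\<in>h. y = i \<or> s \<le> pos n i y" using h(3) ta(2) by (meson le_trans)
    then show ?thesis unfolding A_def using h(1,2) by blast
  qed
  have Bmono: "B s" if ta: "B t" "t \<le> s" for s t
  proof -
    obtain h where h: "h \<in> H" "i \<in> h" "\<forall>y\<in>h. pos n i y \<le> t" using ta(1) unfolding B_def by blast
    have "\<forall>y\<in>h. pos n i y \<le> s" using h(3) ta(2) by (meson le_trans)
    then show ?thesis unfolding B_def using h(1,2) by blast
  qed
  have Abound: "\<And>t. A t \<Longrightarrow> 1 \<le> t \<Longrightarrow> r \<le> n + 1 - t"
  proof -
    fix t assume "A t" "1 \<le> t"
    then obtain h where h: "h \<in> H" "\<forall>y\<in>h. y = i \<or> t \<le> pos n i y" unfolding A_def by blast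
    have "pos n i ` h \<subseteq> insert 0 {t..<n}" using h pi0 posl by auto
    then have "r \<le> card (insert 0 {t..<n})" using card_pos[OF i h(1)] by blast
    also have "\<dots> \<le> Suc (card {t..<n})" by (rule card_insert_le_m1) auto
    finally have "r \<le> Suc (n - t)" by simp
    then show "r \<le> n + 1 - t" using i r2 by arith
  qed
  have Bbound: "\<And>t. B t \<Longrightarrow> r \<le> t + 1"
  proof -
    fix t assume "B t"
    then obtain h where h: "h \<in> H" "\<forall>y\<in>h. pos n i y \<le> t" unfolding B_def by blast
    have "pos n i ` h \<subseteq> {..t}" using h by auto
    then have "r \<le> card {..t}" using card_pos[OF i h(1)] by blast
    then show "r \<le> t + 1" by simp
  qed
  have Ar: "A r"
  proof -
    let ?x = "max x0 r"
    have hx: "\<forall>g\<in>H. i \<notin> g \<longrightarrow> (\<exists>a\<in>g. pos n i a \<le> ?x) \<and> (\<exists>b\<in>g. ?x \<le> pos n i b)"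
    proof (intro ballI impI conjI)
      fix g assume g: "g \<in> H" "i \<notin> g"
      obtain a b where ab: "a \<in> g" "pos n i a \<le> x0" "b \<in> g" "x0 \<le> pos n i b" using x0(3) g by blast
      show "\<exists>a\<in>g. pos n i a \<le> ?x" using ab(1,2) by (intro bexI[of _ a]) auto
      show "\<exists>b\<in>g. ?x \<le> pos n i b"
      proof (cases "r \<le> x0")
        case True then show ?thesis using ab(3,4) by (intro bexI[of _ b]) auto
      next
        case False
        then have mx: "?x = r" by simp
        show ?thesis
        proof (rule ccontr)
          assume "\<not> ?thesis"
          then have lt: "\<forall>b\<in>g. pos n i b < r" unfolding mx by (simp add: not_le)
          have "pos n i ` g \<subseteq> {1..<r}"
          proof
            fix t assume "t \<in> pos n i ` g"
            then obtain y where y: "y \<in> g" "t = pos n i y" by blast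
            show "t \<in> {1..<r}" using gi[OF g y(1)] lt y by simp
          qed
          then have "r \<le> card {1..<r}" using card_pos[OF i g(1)] by blast
          then show False using r2 by simp
        qed
      qed
    qed
    have c1: "1 \<le> r" "r \<le> ?x" "?x \<le> n - 1" "n - 1 < n" "r + r \<le> n - 1 + 2" using x0(2) nr r2 by auto
    obtain h where "h \<in> H" "i \<in> h" "\<forall>y\<in>h. y = i \<or> (r \<le> pos n i y \<and> pos n i y \<le> n - 1)"
      using Kp[OF i c1 hx] by blast
    then show ?thesis unfolding A_def by blast
  qed
  have Bnr: "B (n - r)"
  proof -
    let ?x = "min x0 (n - r)"
    have hx: "\<forall>g\<in>H. i \<notin> g \<longrightarrow> (\<exists>a\<in>g. pos n i a \<le> ?x) \<and> (\<exists>b\<in>g. ?x \<le> pos n i b)"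
    proof (intro ballI impI conjI)
      fix g assume g: "g \<in> H" "i \<notin> g"
      obtain a b where ab: "a \<in> g" "pos n i a \<le> x0" "b \<in> g" "x0 \<le> pos n i b" using x0(3) g by blast
      show "\<exists>b\<in>g. ?x \<le> pos n i b" using ab(3,4) by (intro bexI[of _ b]) auto
      show "\<exists>a\<in>g. pos n i a \<le> ?x"
      proof (cases "x0 \<le> n - r")
        case True then show ?thesis using ab(1,2) by (intro bexI[of _ a]) auto
      next
        case False
        then have mx: "?x = n - r" by simp
        show ?thesis
        proof (rule ccontr)
          assume "\<not> ?thesis"
          then have lt: "\<forall>b\<in>g. n - r < pos n i b" unfolding mx by (simp add: not_le)
          have "pos n i ` g \<subseteq> {n - r + 1..<n}"
          proof
            fix t assume "t \<in> pos n i ` g"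
            then obtain y where y: "y \<in> g" "t = pos n i y" by blast
            have "n - r < pos n i y" using lt y(1) by blast
            then show "t \<in> {n - r + 1..<n}" using posl[of y] y by simp
          qed
          then have "r \<le> card {n - r + 1..<n}" using card_pos[OF i g(1)] by blast
          then show False using nr r2 by simp
        qed
      qed
    qed
    have c1: "1 \<le> (1::nat)" "1 \<le> ?x" "?x \<le> n - r" "n - r < n" "1 + r \<le> n - r + 2" using x0(1) nr r2 by auto
    obtain h where h: "h \<in> H" "i \<in> h" "\<forall>y\<in>h. y = i \<or> (1 \<le> pos n i y \<and> pos n i y \<le> n - r)"
      using Kp[OF i c1 hx] by blast
    have "\<forall>y\<in>h. pos n i y \<le> n - r"
    proof
      fix y assume "y \<in> h" then show "pos n i y \<le> n - r" using h(3) pi0 by (cases "y = i") auto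
    qed
    then show ?thesis unfolding B_def using h(1,2) by blast
  qed
  define L where "L = Max {t. 1 \<le> t \<and> t < n \<and> A t}"
  define R where "R = Min {t. t < n \<and> B t}"
  have finL: "finite {t. 1 \<le> t \<and> t < n \<and> A t}" by simp
  have finR: "finite {t. t < n \<and> B t}" by simp
  have rinL: "r \<in> {t. 1 \<le> t \<and> t < n \<and> A t}" using Ar r2 nr by simp
  have inR: "n - r \<in> {t. t < n \<and> B t}" using Bnr r2 nr by simp
  have Lin: "L \<in> {t. 1 \<le> t \<and> t < n \<and> A t}" unfolding L_def using finL rinL Max_in by blast
  have Rin: "R \<in> {t. t < n \<and> B t}" unfolding R_def using finR inR Min_in by blast
  have Lmax: "\<And>t. 1 \<le> t \<Longrightarrow> t < n \<Longrightarrow> A t \<Longrightarrow> t \<le> L" unfolding L_def using finL by simp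
  have Rmin: "\<And>t. t < n \<Longrightarrow> B t \<Longrightarrow> R \<le> t" unfolding R_def using finR by simp
  have AL: "A L" "1 \<le> L" "L < n" using Lin by auto
  have BR: "B R" "R < n" using Rin by auto
  have rL: "r \<le> L" using Lmax rinL by simp
  have Rnr: "R \<le> n - r" using Rmin inR by simp
  have Lub: "L \<le> n + 1 - r" using Abound[OF AL(1,2)] AL(3) by arith
  have Rlb: "r - 1 \<le> R" using Bbound[OF BR(1)] by simp
  have R1: "1 \<le> R" using Rlb r2 by simp
  have RL: "R \<le> L"
  proof (rule ccontr)
    assume "\<not> R \<le> L"
    then have LR: "L < R" by simp
    show False
    proof (cases "L < x0")
      case True
      have c1: "1 \<le> L + 1" "L + 1 \<le> x0" "x0 \<le> n - 1" "n - 1 < n" "L + 1 + r \<le> n - 1 + 2"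
        using x0(2) True LR Rnr r2 nr by linarith+
      obtain h where "h \<in> H" "i \<in> h" "\<forall>y\<in>h. y = i \<or> (L + 1 \<le> pos n i y \<and> pos n i y \<le> n - 1)"
        using Kp[OF i c1 x0(3)] by blast
      then have "A (L + 1)" unfolding A_def by blast
      moreover have "L + 1 < n" using LR Rnr r2 by linarith
      ultimately show False using Lmax[of "L+1"] by simp
    next
      case False
      have c1: "1 \<le> (1::nat)" "1 \<le> x0" "x0 \<le> R - 1" "R - 1 < n" "1 + r \<le> R - 1 + 2"
        using x0(1) False LR rL BR(2) r2 by linarith+
      obtain h where h: "h \<in> H" "i \<in> h" "\<forall>y\<in>h. y = i \<or> (1 \<le> pos n i y \<and> pos n i y \<le> R - 1)"
        using Kp[OF i c1 x0(3)] by blast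
      have "\<forall>y\<in>h. pos n i y \<le> R - 1"
      proof
        fix y assume "y \<in> h" then show "pos n i y \<le> R - 1" using h(3) pi0 by (cases "y = i") auto
      qed
      then have "B (R - 1)" unfolding B_def using h(1,2) by blast
      moreover have "R - 1 < n" using BR(2) by linarith
      ultimately have "R \<le> R - 1" using Rmin[of "R - 1"] by blast
      then show False using R1 by linarith
    qed
  qed
  have qL: "qinv n i L < n" "pos n i (qinv n i L) = L" using qinv_lt[OF i] pos_qinv[OF i AL(3)] by auto
  have qR: "qinv n i R < n" "pos n i (qinv n i R) = R" using qinv_lt[OF i] pos_qinv[OF i BR(2)] by auto
  have lam_eq: "lam n H i = qinv n i L"
    unfolding lam_def
  proof (rule the_equality)
    have pL1: "pos n i ((qinv n i L + 1) mod n) = (L + 1) mod n" using pos_add[OF i qL(1), of 1] qL(2) by simp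
    obtain h where h: "h \<in> H" "i \<in> h" "\<forall>y\<in>h. y = i \<or> L \<le> pos n i y" using AL(1) unfolding A_def by blast
    have "\<forall>y\<in>h. pos n i y = 0 \<or> (1 \<le> L \<and> L \<le> pos n i y)"
    proof
      fix y assume "y \<in> h" then show "pos n i y = 0 \<or> (1 \<le> L \<and> L \<le> pos n i y)"
        using h(3) pi0 AL(2) by (cases "y = i") auto
    qed
    then have hsub: "h \<subseteq> carc n (qinv n i L) i" using sub_to_i[OF i qL(1) h(1)] qL(2) by simp
    have nsub: "\<not> (\<exists>h\<in>H. i \<in> h \<and> h \<subseteq> carc n ((qinv n i L + 1) mod n) i)"
    proof
      assume "\<exists>h\<in>H. i \<in> h \<and> h \<subseteq> carc n ((qinv n i L + 1) mod n) i"
      then obtain h' where h': "h' \<in> H" "i \<in> h'" "h' \<subseteq> carc n ((qinv n i L + 1) mod n) i" by blast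
      have m: "(qinv n i L + 1) mod n < n" using n0 by simp
      have all: "\<forall>y\<in>h'. pos n i y = 0 \<or> (1 \<le> (L + 1) mod n \<and> (L + 1) mod n \<le> pos n i y)"
        using sub_to_i[OF i m h'(1)] h'(3) pL1 by simp
      show False
      proof (cases "L + 1 = n")
        case True
        then have "\<forall>y\<in>h'. pos n i y = 0" using all by simp
        then show False using small0[OF i h'(1)] by blast
      next
        case False
        then have e: "(L + 1) mod n = L + 1" using AL(3) by simp
        have "\<forall>y\<in>h'. y = i \<or> L + 1 \<le> pos n i y"
        proof
          fix y assume y: "y \<in> h'"
          have "y < n" using Hsub[OF h'(1)] y by blast
          then show "y = i \<or> L + 1 \<le> pos n i y" using all y e pos_zero[OF i] by force
        qed
        then have "A (L + 1)" unfolding A_def using h'(1,2) by blast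
        moreover have "L + 1 < n" using False AL(3) by linarith
        ultimately have "L + 1 \<le> L" using Lmax[of "L + 1"] by simp
        then show False by simp
      qed
    qed
    show "qinv n i L < n \<and> (\<exists>h\<in>H. i \<in> h \<and> h \<subseteq> carc n (qinv n i L) i) \<and>
      \<not> (\<exists>h\<in>H. i \<in> h \<and> h \<subseteq> carc n ((qinv n i L + 1) mod n) i)"
      using qL(1) h(1,2) hsub nsub by blast
  next
    fix u assume P: "u < n \<and> (\<exists>h\<in>H. i \<in> h \<and> h \<subseteq> carc n u i) \<and>
      \<not> (\<exists>h\<in>H. i \<in> h \<and> h \<subseteq> carc n ((u + 1) mod n) i)"
    then obtain h where h: "h \<in> H" "i \<in> h" "h \<subseteq> carc n u i" and un: "u < n" by blast
    let ?p = "pos n i u"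
    have all: "\<forall>y\<in>h. pos n i y = 0 \<or> (1 \<le> ?p \<and> ?p \<le> pos n i y)"
      using sub_to_i[OF i un h(1)] h(3) by simp
    have p1: "1 \<le> ?p"
    proof (rule ccontr)
      assume "\<not> 1 \<le> ?p"
      then have "\<forall>y\<in>h. pos n i y = 0" using all by auto
      then show False using small0[OF i h(1)] by blast
    qed
    have "\<forall>y\<in>h. y = i \<or> ?p \<le> pos n i y"
    proof
      fix y assume y: "y \<in> h"
      have "y < n" using Hsub[OF h(1)] y by blast
      then show "y = i \<or> ?p \<le> pos n i y" using all y pos_zero[OF i] by force
    qed
    then have Ap: "A ?p" unfolding A_def using h(1,2) by blast
    have pL: "?p \<le> L" using Lmax[OF p1 posl Ap] .
    have "\<not> ?p < L"
    proof
      assume pl: "?p < L"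
      then have "A (?p + 1)" using Amono[OF AL(1)] by simp
      then obtain h' where h': "h' \<in> H" "i \<in> h'" "\<forall>y\<in>h'. y = i \<or> ?p + 1 \<le> pos n i y" unfolding A_def by blast
      have pp: "pos n i ((u + 1) mod n) = ?p + 1" using pos_add[OF i un, of 1] pl AL(3) by simp
      have m: "(u + 1) mod n < n" using n0 by simp
      have "\<forall>y\<in>h'. pos n i y = 0 \<or> (1 \<le> ?p + 1 \<and> ?p + 1 \<le> pos n i y)"
      proof
        fix y assume "y \<in> h'" then show "pos n i y = 0 \<or> (1 \<le> ?p + 1 \<and> ?p + 1 \<le> pos n i y)"
          using h'(3) pi0 by (cases "y = i") auto
      qed
      then have "h' \<subseteq> carc n ((u + 1) mod n) i" using sub_to_i[OF i m h'(1)] pp by simp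
      then show False using P h'(1,2) by blast
    qed
    then have "?p = L" using pL by simp
    then show "u = qinv n i L" using qinv_pos[OF i un] by simp
  qed
  have sh: "\<And>p. 1 \<le> p \<Longrightarrow> p < n \<Longrightarrow> (p + (n - 1)) mod n = p - 1"
  proof -
    fix p :: nat assume "1 \<le> p" "p < n"
    then have "(p + (n - 1)) mod n = (if p + (n - 1) < n then p + (n - 1) else p + (n - 1) - n)" by (intro mod2) arith
    then show "(p + (n - 1)) mod n = p - 1" using \<open>1 \<le> p\<close> \<open>p < n\<close> by simp
  qed
  have nm1: "\<And>u. u + n - 1 = u + (n - 1)" using n0 by simp
  have rho_eq: "rho n H i = qinv n i R"
    unfolding rho_def
  proof (rule the_equality)
    have pR1: "pos n i ((qinv n i R + n - 1) mod n) = R - 1"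
      using pos_add[OF i qR(1), of "n - 1"] qR(2) sh[OF R1 BR(2)] nm1 by simp
    obtain h where h: "h \<in> H" "i \<in> h" "\<forall>y\<in>h. pos n i y \<le> R" using BR(1) unfolding B_def by blast
    have hsub: "h \<subseteq> carc n i (qinv n i R)" using sub_from_i[OF i qR(1) h(1)] qR(2) h(3) by simp
    have nsub: "\<not> (\<exists>h\<in>H. i \<in> h \<and> h \<subseteq> carc n i ((qinv n i R + n - 1) mod n))"
    proof
      assume "\<exists>h\<in>H. i \<in> h \<and> h \<subseteq> carc n i ((qinv n i R + n - 1) mod n)"
      then obtain h' where h': "h' \<in> H" "i \<in> h'" "h' \<subseteq> carc n i ((qinv n i R + n - 1) mod n)" by blast
      have m: "(qinv n i R + n - 1) mod n < n" using n0 by simp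
      have "\<forall>y\<in>h'. pos n i y \<le> R - 1" using sub_from_i[OF i m h'(1)] h'(3) pR1 by simp
      then have "B (R - 1)" unfolding B_def using h'(1,2) by blast
      moreover have "R - 1 < n" using BR(2) by linarith
      ultimately have "R \<le> R - 1" using Rmin[of "R - 1"] by blast
      then show False using R1 by linarith
    qed
    show "qinv n i R < n \<and> (\<exists>h\<in>H. i \<in> h \<and> h \<subseteq> carc n i (qinv n i R)) \<and>
      \<not> (\<exists>h\<in>H. i \<in> h \<and> h \<subseteq> carc n i ((qinv n i R + n - 1) mod n))"
      using qR(1) h(1,2) hsub nsub by blast
  next
    fix u assume P: "u < n \<and> (\<exists>h\<in>H. i \<in> h \<and> h \<subseteq> carc n i u) \<and>
      \<not> (\<exists>h\<in>H. i \<in> h \<and> h \<subseteq> carc n i ((u + n - 1) mod n))"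
    then obtain h where h: "h \<in> H" "i \<in> h" "h \<subseteq> carc n i u" and un: "u < n" by blast
    let ?p = "pos n i u"
    have all: "\<forall>y\<in>h. pos n i y \<le> ?p" using sub_from_i[OF i un h(1)] h(3) by simp
    then have Bp: "B ?p" unfolding B_def using h(1,2) by blast
    have p1: "1 \<le> ?p"
    proof (rule ccontr)
      assume "\<not> 1 \<le> ?p"
      then have "\<forall>y\<in>h. pos n i y = 0" using all by auto
      then show False using small0[OF i h(1)] by blast
    qed
    have Rp: "R \<le> ?p" using Rmin[OF posl Bp] .
    have "\<not> R < ?p"
    proof
      assume pl: "R < ?p"
      then have "B (?p - 1)" using Bmono[OF BR(1)] by simp
      then obtain h' where h': "h' \<in> H" "i \<in> h'" "\<forall>y\<in>h'. pos n i y \<le> ?p - 1" unfolding B_def by blast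
      have pp: "pos n i ((u + n - 1) mod n) = ?p - 1" using pos_add[OF i un, of "n - 1"] sh[OF p1 posl] nm1 by simp
      have m: "(u + n - 1) mod n < n" using n0 by simp
      have "h' \<subseteq> carc n i ((u + n - 1) mod n)" using sub_from_i[OF i m h'(1)] pp h'(3) by simp
      then show False using P h'(1,2) by blast
    qed
    then have "?p = R" using Rp by simp
    then show "u = qinv n i R" using qinv_pos[OF i un] by simp
  qed
  have part2a: "qinv n i L \<notin> carc n ((i + n + 2 - r) mod n) ((i + r - 1) mod n)"
  proof
    assume mem: "qinv n i L \<in> carc n ((i + n + 2 - r) mod n) ((i + r - 1) mod n)"
    have e1: "i + n + 2 - r = i + (n + 2 - r)" "i + r - 1 = i + (r - 1)" using nr r2 by arith+
    have p1: "pos n i ((i + n + 2 - r) mod n) = (n + 2 - r) mod n" unfolding e1 using pos_shift[OF i] .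
    have p2: "pos n i ((i + r - 1) mod n) = (r - 1) mod n" unfolding e1 using pos_shift[OF i] .
    have "DD n ((n + 2 - r) mod n) L \<le> DD n ((n + 2 - r) mod n) ((r - 1) mod n)"
      using mem carc_pos[OF i, of "(i + n + 2 - r) mod n" "(i + r - 1) mod n" "qinv n i L"] n0 p1 p2 qL(2) by simp
    then show False using lam_arith[OF r2 nr rL Lub] by blast
  qed
  have part2b: "qinv n i R \<notin> carc n ((i + n + 1 - r) mod n) ((i + r - 2) mod n)"
  proof
    assume mem: "qinv n i R \<in> carc n ((i + n + 1 - r) mod n) ((i + r - 2) mod n)"
    have e1: "i + n + 1 - r = i + (n + 1 - r)" "i + r - 2 = i + (r - 2)" using nr r2 by arith+
    have p1: "pos n i ((i + n + 1 - r) mod n) = (n + 1 - r) mod n" unfolding e1 using pos_shift[OF i] .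
    have p2: "pos n i ((i + r - 2) mod n) = (r - 2) mod n" unfolding e1 using pos_shift[OF i] .
    have "DD n ((n + 1 - r) mod n) R \<le> DD n ((n + 1 - r) mod n) ((r - 2) mod n)"
      using mem carc_pos[OF i, of "(i + n + 1 - r) mod n" "(i + r - 2) mod n" "qinv n i R"] n0 p1 p2 qR(2) by simp
    then show False using rho_arith[OF r2 nr Rlb Rnr] by blast
  qed
  have Ri: "qinv n i R \<noteq> i" using qR pi0 R1 by (metis not_one_le_zero)
  have Li: "qinv n i L \<noteq> i" using qL pi0 AL(2) by (metis not_one_le_zero)
  have part3: "qinv n i R \<in> ocarc n i (qinv n i L)"
    unfolding ocarc_def using carc_from_i[OF i qL(1), of "qinv n i R"] qR qL RL Ri by simp
  have part4: "\<forall>j<n. j \<in> carc n (qinv n i R) (qinv n i L) \<longrightarrow> (\<forall>e\<in>r_sets n r. {i, j} \<subseteq> e \<longrightarrow> e \<in> H)"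
  proof (intro allI impI ballI)
    fix j e assume jn: "j < n" and jC: "j \<in> carc n (qinv n i R) (qinv n i L)" and er: "e \<in> r_sets n r"
      and ije: "{i, j} \<subseteq> e"
    let ?pj = "pos n i j"
    have "DD n R ?pj \<le> DD n R L" using carc_pos[OF i qR(1) qL(1), of j] jC qR(2) qL(2) by simp
    then have pjb: "R \<le> ?pj" "?pj \<le> L" using RL posl[of j] AL(3) unfolding DD_def by (auto split: if_splits)
    obtain hR where hR: "hR \<in> H" "i \<in> hR" "\<forall>y\<in>hR. pos n i y \<le> R" using BR(1) unfolding B_def by blast
    obtain hL where hL: "hL \<in> H" "i \<in> hL" "\<forall>y\<in>hL. y = i \<or> L \<le> pos n i y" using AL(1) unfolding A_def by blast
    show "e \<in> H"
    proof (rule ccontr)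
      assume ne: "e \<notin> H"
      then have "has_M1 n (insert e H)" using maxl er by blast
      then obtain h1 h2 u u' where hh: "h1 \<in> insert e H" "h2 \<in> insert e H" "u < n" "u' < n" "u \<noteq> u'"
        "h1 \<subseteq> carc n u u'" "h2 \<inter> carc n u u' = {}" unfolding has_M1_def by blast
      let ?C = "carc n u u'"
      let ?s = "pos n i u" and ?d = "DD n (pos n i u) (pos n i u')"
      have mem: "\<And>y. y < n \<Longrightarrow> y \<in> ?C \<longleftrightarrow> DD n ?s (pos n i y) \<le> ?d"
        using carc_pos[OF i hh(3,4)] by blast
      have sn: "?s < n" using posl .
      have hRn: "\<And>y. y \<in> hR \<Longrightarrow> y < n" using Hsub[OF hR(1)] by blast
      have hLn: "\<And>y. y \<in> hL \<Longrightarrow> y < n" using Hsub[OF hL(1)] by blast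
      show False
      proof (cases "h1 = e")
        case True
        then have iC: "i \<in> ?C" and jCC: "j \<in> ?C" using hh(6) ije by auto
        have "h2 \<noteq> e" using hh(7) iC ije by auto
        then have h2H: "h2 \<in> H" using hh(2) by auto
        have m0: "DD n ?s 0 \<le> ?d" using mem[OF i] iC pi0 by simp
        have mj: "DD n ?s ?pj \<le> ?d" using mem[OF jn] jCC by simp
        show False
        proof (cases "\<forall>t\<le>?pj. DD n ?s t \<le> ?d")
          case True
          have "hR \<subseteq> ?C"
          proof
            fix y assume y: "y \<in> hR"
            have "pos n i y \<le> ?pj" using hR(3) y pjb by force
            then show "y \<in> ?C" using True mem[OF hRn[OF y]] by blast
          qed
          then show False using noM1[OF hR(1) h2H hh(3-5) _ hh(7)] by blast
        next
          case False
          then have T: "\<forall>t<n. ?pj \<le> t \<longrightarrow> DD n ?s t \<le> ?d" using conv1[OF sn m0 mj posl] by blast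
          have "hL \<subseteq> ?C"
          proof
            fix y assume y: "y \<in> hL"
            show "y \<in> ?C"
            proof (cases "y = i")
              case True then show ?thesis using iC by simp
            next
              case False
              then have "?pj \<le> pos n i y" using hL(3) y pjb by force
              then show ?thesis using T posl mem[OF hLn[OF y]] by blast
            qed
          qed
          then show False using noM1[OF hL(1) h2H hh(3-5) _ hh(7)] by blast
        qed
      next
        case False
        then have h1H: "h1 \<in> H" using hh(1) by auto
        have "h2 = e" using noM1[OF h1H _ hh(3-7)] hh(2) by blast
        then have iC: "i \<notin> ?C" and jCC: "j \<notin> ?C" using hh(7) ije by auto
        have m0: "\<not> DD n ?s 0 \<le> ?d" using mem[OF i] iC pi0 by simp
        have mj: "\<not> DD n ?s ?pj \<le> ?d" using mem[OF jn] jCC by simp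
        show False
        proof (cases "\<forall>t<n. DD n ?s t \<le> ?d \<longrightarrow> t < ?pj")
          case True
          have "hL \<inter> ?C = {}"
          proof (rule ccontr)
            assume "hL \<inter> ?C \<noteq> {}"
            then obtain y where y: "y \<in> hL" "y \<in> ?C" by blast
            have "y \<noteq> i" using y iC by blast
            then have "?pj \<le> pos n i y" using hL(3) y pjb by force
            moreover have "pos n i y < ?pj" using True mem[OF hLn[OF y(1)]] y(2) posl by blast
            ultimately show False by simp
          qed
          then show False using noM1[OF h1H hL(1) hh(3-6)] by blast
        next
          case False
          then have T: "\<forall>t<n. DD n ?s t \<le> ?d \<longrightarrow> ?pj < t" using conv2[OF sn m0 mj posl] by blast
          have "hR \<inter> ?C = {}"
          proof (rule ccontr)
            assume "hR \<inter> ?C \<noteq> {}"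
            then obtain y where y: "y \<in> hR" "y \<in> ?C" by blast
            have "pos n i y \<le> ?pj" using hR(3) y pjb by force
            moreover have "?pj < pos n i y" using T mem[OF hRn[OF y(1)]] y(2) posl by blast
            ultimately show False by simp
          qed
          then show False using noM1[OF h1H hR(1) hh(3-6)] by blast
        qed
      qed
    qed
  qed
  show ?thesis unfolding lam_eq rho_eq using cover part2a part2b part3 Ri Li part4 by blast
qed

end

theorem proposition3p4:
  fixes n r :: nat and H :: "nat set set"
  assumes "r \<ge> 2" and "n \<ge> 2 * r" and "M1_saturated n r H"
  shows "(\<forall>i<n. \<exists>h\<in>H. i \<in> h)
    \<and> (\<forall>i<n. lam n H i \<notin> carc n ((i + n + 2 - r) mod n) ((i + r - 1) mod n)
             \<and> rho n H i \<notin> carc n ((i + n + 1 - r) mod n) ((i + r - 2) mod n))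
    \<and> (\<forall>i<n. rho n H i \<in> ocarc n i (lam n H i) \<and> rho n H i \<noteq> i \<and> lam n H i \<noteq> i)
    \<and> (\<forall>i<n. \<forall>j<n. j \<in> carc n (rho n H i) (lam n H i) \<longrightarrow>
          (\<forall>e \<in> r_sets n r. {i, j} \<subseteq> e \<longrightarrow> e \<in> H))"
proof -
  interpret sat n r H using assms by unfold_locales
  show ?thesis using vertex by blast
qed

end
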